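(* Let $\alpha>0$, $\beta,\eta,\kappa\in\mathbb{R}$, $\rho>0$, $p\geq 1$ and $q$ with $\frac1p+\frac1q=1$, and $0\le a<x$. Let $f,g$ be two positive functions on $[0,\infty)$ with $f,g\in X^{p}_{c}(a,x)$ (for some $c\in\mathbb{R}$), such that ${}^{\rho}\mathcal{I}^{\alpha,\beta}_{a+,\eta,\kappa}f(x)<\infty$ and ${}^{\rho}\mathcal{I}^{\alpha,\beta}_{a+,\eta,\kappa}g(x)<\infty$. If there are real numbers $m,M>0$ with $0<m\leq \frac{f(t)}{g(t)}\leq M$ for all $t\in[a,x]$, then $$\left({}^{\rho}\mathcal{I}^{\alpha,\beta}_{a+,\eta,\kappa}f(x)\right)^{1/p}\left({}^{\rho}\mathcal{I}^{\alpha,\beta}_{a+,\eta,\kappa}g(x)\right)^{1/q}\leq\left(\frac{M}{m}\right)^{\frac{1}{pq}}\,{}^{\rho}\mathcal{I}^{\alpha,\beta}_{a+,\eta,\kappa}\big(f^{1/p}g^{1/q}\big)(x).$$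
   Context: For $c\in\mathbb{R}$ and $1\le p<\infty$, $X^{p}_{c}(a,b)$ denotes the space of Lebesgue measurable functions $f$ on $(a,b)$ with $\left(\int_a^b |t^{c}f(t)|^{p}\,\frac{dt}{t}\right)^{1/p}<\infty$. For $\alpha>0$, $\beta,\eta,\kappa\in\mathbb{R}$, $\rho>0$, $0\le a<x$, and a function $\varphi$, the generalized (Katugampola) fractional integral is $${}^{\rho}\mathcal{I}^{\alpha,\beta}_{a+,\eta,\kappa}\varphi(x)=\frac{\rho^{1-\beta}x^{\kappa}}{\Gamma(\alpha)}\int_{a}^{x}\frac{\tau^{\rho(\eta+1)-1}}{(x^{\rho}-\tau^{\rho})^{1-\alpha}}\varphi(\tau)\,d\tau,$$ whenever the integral exists. ${}^{\rho}\mathcal{I}^{\alpha,\beta}_{a+,\eta,\kappa}(f^{1/p}g^{1/q})(x)$ means the operator applied to $\tau\mapsto f(\tau)^{1/p}g(\tau)^{1/q}$, evaluated at $x$. *)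

theory Defs
  imports "HOL-Analysis.Analysis"
begin

definition Xpc :: "real \<Rightarrow> real \<Rightarrow> real \<Rightarrow> real \<Rightarrow> (real \<Rightarrow> real) \<Rightarrow> bool" where
  "Xpc c p a b f \<longleftrightarrow>
     set_borel_measurable lborel {a<..<b} f \<and>
     set_integrable lborel {a<..<b} (\<lambda>t. \<bar>t powr c * f t\<bar> powr p / t)"

definition katu_kernel :: "real \<Rightarrow> real \<Rightarrow> real \<Rightarrow> real \<Rightarrow> real \<Rightarrow> real" where
  "katu_kernel \<rho> \<alpha> \<eta> x \<tau> =
     \<tau> powr (\<rho> * (\<eta> + 1) - 1) / (x powr \<rho> - \<tau> powr \<rho>) powr (1 - \<alpha>)"

definition katu_integrable ::
  "real \<Rightarrow> real \<Rightarrow> real \<Rightarrow> real \<Rightarrow> (real \<Rightarrow> real) \<Rightarrow> real \<Rightarrow> bool" where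
  "katu_integrable \<rho> \<alpha> \<eta> a \<phi> x \<longleftrightarrow>
     set_integrable lborel {a<..<x} (\<lambda>\<tau>. katu_kernel \<rho> \<alpha> \<eta> x \<tau> * \<phi> \<tau>)"

definition katu_int ::
  "real \<Rightarrow> real \<Rightarrow> real \<Rightarrow> real \<Rightarrow> real \<Rightarrow> real \<Rightarrow> (real \<Rightarrow> real) \<Rightarrow> real \<Rightarrow> real" where
  "katu_int \<rho> \<alpha> \<beta> \<eta> \<kappa> a \<phi> x =
     \<rho> powr (1 - \<beta>) * x powr \<kappa> / Gamma \<alpha> *
     (LINT \<tau>:{a<..<x}|lborel. katu_kernel \<rho> \<alpha> \<eta> x \<tau> * \<phi> \<tau>)"

end

theory Submission
  imports Defs
begin

lemma kernel_nonneg: "katu_kernel \<rho> \<alpha> \<eta> x \<tau> \<ge> 0"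
  unfolding katu_kernel_def by simp

theorem theorem10:
  fixes \<alpha> \<beta> \<eta> \<kappa> \<rho> p q a x c m M :: real and f g :: "real \<Rightarrow> real"
  assumes "\<alpha> > 0" "\<rho> > 0" "p \<ge> 1" "1 / p + 1 / q = 1"
    and "0 \<le> a" "a < x"
    and "\<And>t. t \<ge> 0 \<Longrightarrow> f t > 0" "\<And>t. t \<ge> 0 \<Longrightarrow> g t > 0"
    and "Xpc c p a x f" "Xpc c p a x g"
    and "katu_integrable \<rho> \<alpha> \<eta> a f x" "katu_integrable \<rho> \<alpha> \<eta> a g x"
    and "m > 0" "M > 0"
    and "\<And>t. t \<in> {a..x} \<Longrightarrow> m \<le> f t / g t \<and> f t / g t \<le> M"
  shows "(katu_int \<rho> \<alpha> \<beta> \<eta> \<kappa> a f x) powr (1 / p) * (katu_int \<rho> \<alpha> \<beta> \<eta> \<kappa> a g x) powr (1 / q)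
         \<le> (M / m) powr (1 / (p * q)) *
           katu_int \<rho> \<alpha> \<beta> \<eta> \<kappa> a (\<lambda>\<tau>. f \<tau> powr (1 / p) * g \<tau> powr (1 / q)) x"
proof -
  define K where "K = katu_kernel \<rho> \<alpha> \<eta> x"
  define h where "h = (\<lambda>\<tau>. f \<tau> powr (1 / p) * g \<tau> powr (1 / q))"
  define S where "S = {a<..<x}"
  have K0: "\<And>t. K t \<ge> 0" unfolding K_def by (rule kernel_nonneg)
  have p0: "1/p > 0" using assms(3) by simp
  have q0: "1/q \<ge> 0"
  proof -
    have "1/p \<le> 1" using assms(3) by simp
    thus ?thesis using assms(4) by linarith
  qed
  have pq: "1 / (p*q) = (1/p) * (1/q)" by simp
  have fpos: "\<And>t. t \<in> S \<Longrightarrow> f t > 0" and gpos: "\<And>t. t \<in> S \<Longrightarrow> g t > 0"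
    using assms(5,7,8) unfolding S_def by auto
  have bnd: "\<And>t. t \<in> S \<Longrightarrow> m * g t \<le> f t \<and> f t \<le> M * g t"
  proof -
    fix t assume t: "t \<in> S"
    hence "t \<in> {a..x}" unfolding S_def by auto
    from assms(15)[OF this] gpos[OF t] show "m * g t \<le> f t \<and> f t \<le> M * g t"
      by (simp add: field_simps)
  qed
  have split: "\<And>y. y > 0 \<Longrightarrow> y = y powr (1/p) * y powr (1/q)"
    using assms(4) by (simp add: powr_add[symmetric])
  have i1: "\<And>t. t \<in> S \<Longrightarrow> f t \<le> M powr (1/q) * h t"
  proof -
    fix t assume t: "t \<in> S"
    have "f t powr (1/q) \<le> (M * g t) powr (1/q)"
      using bnd[OF t] fpos[OF t] q0 by (intro powr_mono2) auto
    also have "\<dots> = M powr (1/q) * g t powr (1/q)"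
      using assms(14) gpos[OF t] by (simp add: powr_mult)
    finally have "f t \<le> f t powr (1/p) * (M powr (1/q) * g t powr (1/q))"
      using split[OF fpos[OF t]] by (metis mult_left_mono powr_ge_zero)
    thus "f t \<le> M powr (1/q) * h t" unfolding h_def by (simp add: ac_simps)
  qed
  have i2: "\<And>t. t \<in> S \<Longrightarrow> m powr (1/p) * g t \<le> h t"
  proof -
    fix t assume t: "t \<in> S"
    have "(m * g t) powr (1/p) \<le> f t powr (1/p)"
      using bnd[OF t] gpos[OF t] assms(13) p0 by (intro powr_mono2) auto
    moreover have "(m * g t) powr (1/p) = m powr (1/p) * g t powr (1/p)"
      using assms(13) gpos[OF t] by (simp add: powr_mult)
    ultimately have "m powr (1/p) * g t powr (1/p) * g t powr (1/q) \<le> h t"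
      unfolding h_def by (metis mult_right_mono powr_ge_zero)
    thus "m powr (1/p) * g t \<le> h t"
      using split[OF gpos[OF t]] by (simp add: ac_simps)
  qed
  have i3: "\<And>t. t \<in> S \<Longrightarrow> h t \<le> m powr (- (1/q)) * f t"
  proof -
    fix t assume t: "t \<in> S"
    have "g t powr (1/q) \<le> (f t / m) powr (1/q)"
      using bnd[OF t] gpos[OF t] assms(13) q0 by (intro powr_mono2) (auto simp: field_simps)
    also have "\<dots> = f t powr (1/q) * m powr (- (1/q))"
      using assms(13) fpos[OF t] by (simp add: powr_divide powr_minus_divide)
    finally have "h t \<le> f t powr (1/p) * (f t powr (1/q) * m powr (- (1/q)))"
      unfolding h_def by (metis mult_left_mono powr_ge_zero)
    thus "h t \<le> m powr (- (1/q)) * f t"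
      using split[OF fpos[OF t]] by (simp add: ac_simps)
  qed
  have intf: "set_integrable lborel S (\<lambda>t. K t * f t)"
    using assms(11) unfolding katu_integrable_def K_def S_def .
  have intg: "set_integrable lborel S (\<lambda>t. K t * g t)"
    using assms(12) unfolding katu_integrable_def K_def S_def .
  have mf: "(\<lambda>t. indicator S t * (K t * f t)) \<in> borel_measurable lborel"
    using intf unfolding set_integrable_def by (simp add: borel_measurable_integrable)
  have mg: "(\<lambda>t. indicator S t * (K t * g t)) \<in> borel_measurable lborel"
    using intg unfolding set_integrable_def by (simp add: borel_measurable_integrable)
  have eq: "indicator S t * (K t * h t) =
      (indicator S t * (K t * f t)) powr (1/p) * (indicator S t * (K t * g t)) powr (1/q)" for t
  proof (cases "t \<in> S")
    case True
    show ?thesis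
    proof (cases "K t = 0")
      case True then show ?thesis using p0 by simp
    next
      case False
      hence Kp: "K t > 0" using K0[of t] by simp
      have "(K t * f t) powr (1/p) * (K t * g t) powr (1/q)
          = (K t powr (1/p) * K t powr (1/q)) * h t"
        using Kp fpos[OF True] gpos[OF True] unfolding h_def by (simp add: powr_mult ac_simps)
      also have "\<dots> = K t * h t" using split[OF Kp] by simp
      finally show ?thesis using True by simp
    qed
  next
    case False then show ?thesis using p0 by simp
  qed
  have mh: "set_borel_measurable lborel S (\<lambda>t. K t * h t)"
    unfolding set_borel_measurable_def using mf mg by (simp add: eq)
  have inth: "set_integrable lborel S (\<lambda>t. K t * h t)"
  proof (rule set_integrable_bound[OF _ mh])
    show "set_integrable lborel S (\<lambda>t. m powr (- (1/q)) * (K t * f t))"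
      using intf by simp
    show "AE t in lborel. t \<in> S \<longrightarrow> norm (K t * h t) \<le> norm (m powr (- (1/q)) * (K t * f t))"
    proof (rule AE_I2, intro impI)
      fix t assume t: "t \<in> S"
      have hp: "h t \<ge> 0" unfolding h_def by simp
      have "K t * h t \<le> K t * (m powr (- (1/q)) * f t)"
        using i3[OF t] K0[of t] by (rule mult_left_mono)
      thus "norm (K t * h t) \<le> norm (m powr (- (1/q)) * (K t * f t))"
        using hp K0[of t] fpos[OF t] by (simp add: ac_simps)
    qed
  qed
  define F where "F = (LINT t:S|lborel. K t * f t)"
  define G where "G = (LINT t:S|lborel. K t * g t)"
  define H where "H = (LINT t:S|lborel. K t * h t)"
  have F1: "F \<le> M powr (1/q) * H"
  proof -
    have "F \<le> (LINT t:S|lborel. M powr (1/q) * (K t * h t))"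
      unfolding F_def
    proof (rule set_integral_mono[OF intf])
      show "set_integrable lborel S (\<lambda>t. M powr (1/q) * (K t * h t))" using inth by simp
      fix t assume t: "t \<in> S"
      have "K t * f t \<le> K t * (M powr (1/q) * h t)" by (rule mult_left_mono[OF i1[OF t] K0])
      thus "K t * f t \<le> M powr (1/q) * (K t * h t)" by (simp add: ac_simps)
    qed
    thus ?thesis unfolding H_def by simp
  qed
  have G1: "m powr (1/p) * G \<le> H"
  proof -
    have "(LINT t:S|lborel. m powr (1/p) * (K t * g t)) \<le> H"
      unfolding H_def
    proof (rule set_integral_mono[OF _ inth])
      show "set_integrable lborel S (\<lambda>t. m powr (1/p) * (K t * g t))" using intg by simp
      fix t assume t: "t \<in> S"
      have "K t * (m powr (1/p) * g t) \<le> K t * h t" by (rule mult_left_mono[OF i2[OF t] K0])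
      thus "m powr (1/p) * (K t * g t) \<le> K t * h t" by (simp add: ac_simps)
    qed
    thus ?thesis unfolding G_def by simp
  qed
  have F0: "F \<ge> 0" unfolding F_def
    unfolding set_lebesgue_integral_def
    proof (rule Bochner_Integration.integral_nonneg)
    fix t
    show "0 \<le> indicator S t *\<^sub>R (K t * f t)"
    proof (cases "t \<in> S")
      case True thus ?thesis using K0[of t] fpos[OF True] by simp
    qed simp
  qed
  have G0: "G \<ge> 0" unfolding G_def
    unfolding set_lebesgue_integral_def
    proof (rule Bochner_Integration.integral_nonneg)
    fix t
    show "0 \<le> indicator S t *\<^sub>R (K t * g t)"
    proof (cases "t \<in> S")
      case True thus ?thesis using K0[of t] gpos[OF True] by simp
    qed simp
  qed
  define C where "C = \<rho> powr (1 - \<beta>) * x powr \<kappa> / Gamma \<alpha>"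
  have C0: "C > 0" unfolding C_def using assms(1,2,5,6) by (simp add: Gamma_real_pos)
  have kf: "katu_int \<rho> \<alpha> \<beta> \<eta> \<kappa> a f x = C * F"
    and kg: "katu_int \<rho> \<alpha> \<beta> \<eta> \<kappa> a g x = C * G"
    and kh: "katu_int \<rho> \<alpha> \<beta> \<eta> \<kappa> a h x = C * H"
    unfolding katu_int_def C_def F_def G_def H_def K_def S_def by simp_all
  define A where "A = C * F"
  define B where "B = C * G"
  define D where "D = C * H"
  have A0: "A \<ge> 0" and B0: "B \<ge> 0" unfolding A_def B_def using C0 F0 G0 by auto
  have AD: "A \<le> M powr (1/q) * D" unfolding A_def D_def using F1 C0
    by (metis mult.left_commute mult_left_mono less_imp_le)
  have BD: "m powr (1/p) * B \<le> D" unfolding B_def D_def using G1 C0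
    by (metis mult.left_commute mult_left_mono less_imp_le)
  have D0: "D \<ge> 0" using BD B0 by (meson order_trans mult_nonneg_nonneg powr_ge_zero)
  have a1: "A powr (1/p) \<le> M powr (1/(p*q)) * D powr (1/p)"
  proof -
    have "A powr (1/p) \<le> (M powr (1/q) * D) powr (1/p)"
      using AD A0 p0 by (intro powr_mono2) auto
    also have "\<dots> = M powr (1/(p*q)) * D powr (1/p)"
      using D0 by (simp add: powr_mult powr_powr mult.commute)
    finally show ?thesis .
  qed
  have b1: "m powr (1/(p*q)) * B powr (1/q) \<le> D powr (1/q)"
  proof -
    have "(m powr (1/p) * B) powr (1/q) \<le> D powr (1/q)"
      using BD B0 q0 by (intro powr_mono2) auto
    moreover have "(m powr (1/p) * B) powr (1/q) = m powr (1/(p*q)) * B powr (1/q)"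
      using B0 by (simp add: powr_mult powr_powr mult.commute)
    ultimately show ?thesis by simp
  qed
  have mpos: "m powr (1/(p*q)) > 0" using assms(13) by simp
  have "A powr (1/p) * B powr (1/q) \<le> M powr (1/(p*q)) * D powr (1/p) * B powr (1/q)"
    using a1 by (simp add: mult_right_mono)
  also have "\<dots> \<le> M powr (1/(p*q)) * D powr (1/p) * (D powr (1/q) / m powr (1/(p*q)))"
    using b1 mpos by (intro mult_left_mono) (auto simp: field_simps)
  also have "\<dots> = (M / m) powr (1/(p*q)) * (D powr (1/p) * D powr (1/q))"
    using assms(13,14) by (simp add: powr_divide)
  also have "D powr (1/p) * D powr (1/q) = D"
    using assms(4) D0 by (simp add: powr_add[symmetric])
  finally show ?thesis using kf kg kh unfolding A_def B_def D_def h_def by simp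
qed

end
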